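(* $\mathcal{E}_v$ is ground complete for $\simeq$: for all closed monitors $m,n$, if $m\simeq n$ then $\mathcal{E}_v\vdash m=n$.
   Context: Monitors: terms $m,n ::= v \mid a.m \mid m+n \mid x$ over a nonempty action set $\mathit{Act}$ ($a\in\mathit{Act}$) and variables $x$, verdicts $v::=\mathit{end}\mid\mathit{yes}\mid\mathit{no}$; closed monitors contain no variables. Transitions $\xrightarrow{\alpha}$, $\alpha\in\mathit{Act}\cup\{\tau\}$ ($\tau\notin\mathit{Act}$): least relation with $a.m\xrightarrow{a}m$; $m\xrightarrow{\alpha}m'$ implies $m+n\xrightarrow{\alpha}m'$ and $n+m\xrightarrow{\alpha}m'$; $v\xrightarrow{\alpha}v$ for each verdict $v$. Weak transitions: $m\xRightarrow{\varepsilon}m'$ iff $m(\xrightarrow{\tau})^*m'$; $m\xRightarrow{a}m'$ iff $m\xRightarrow{\varepsilon}\xrightarrow{a}\xRightarrow{\varepsilon}m'$; $m\xRightarrow{as'}m'$ ($s'\neq\varepsilon$) iff $m\xRightarrow{a}m_1\xRightarrow{s'}m'$. For closed $m$: $L_a(m)=\{s\in\mathit{Act}^*\mid m\xRightarrow{s}\mathit{yes}\}$, $L_r(m)=\{s\in\mathit{Act}^*\mid m\xRightarrow{s}\mathit{no}\}$; $m\simeq n$ iff $L_a(m)=L_a(n)$ and $L_r(m)=L_r(n)$. $\mathcal{E}\vdash m=n$ denotes derivability by reflexivity, symmetry, transitivity, substitution and congruence for $a.\_$ and $+$. $\mathcal{E}_v$ consists of (A1) $x+y=y+x$; (A2) $x+(y+z)=(x+y)+z$;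 (A3) $x+x=x$; (A4) $x+\mathit{end}=x$; and, for each $a\in\mathit{Act}$, ($E_a$) $a.\mathit{end}=\mathit{end}$; ($Y_a$) $\mathit{yes}=\mathit{yes}+a.\mathit{yes}$; ($N_a$) $\mathit{no}=\mathit{no}+a.\mathit{no}$; ($D_a$) $a.(x+y)=a.x+a.y$. *)

theory Defs
  imports Main
begin

datatype verdict = End | Yes | No

datatype 'a mon = Verd verdict | Pref 'a "'a mon" | Sum "'a mon" "'a mon" | Var nat

datatype 'a lab = Act 'a | Tau

inductive step :: "'a mon \<Rightarrow> 'a lab \<Rightarrow> 'a mon \<Rightarrow> bool" where
  pref: "step (Pref a m) (Act a) m"
| suml: "step m \<alpha> m' \<Longrightarrow> step (Sum m n) \<alpha> m'"
| sumr: "step m \<alpha> m' \<Longrightarrow> step (Sum n m) \<alpha> m'"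
| verd: "step (Verd v) \<alpha> (Verd v)"

definition tau_star :: "'a mon \<Rightarrow> 'a mon \<Rightarrow> bool" where
  "tau_star = (\<lambda>m m'. step m Tau m')\<^sup>*\<^sup>*"

definition weak_act :: "'a mon \<Rightarrow> 'a \<Rightarrow> 'a mon \<Rightarrow> bool" where
  "weak_act m a m' \<longleftrightarrow> (\<exists>m1 m2. tau_star m m1 \<and> step m1 (Act a) m2 \<and> tau_star m2 m')"

fun wtrace :: "'a mon \<Rightarrow> 'a list \<Rightarrow> 'a mon \<Rightarrow> bool" where
  "wtrace m [] m' = tau_star m m'"
| "wtrace m [a] m' = weak_act m a m'"
| "wtrace m (a # b # s) m' = (\<exists>m1. weak_act m a m1 \<and> wtrace m1 (b # s) m')"

fun vars :: "'a mon \<Rightarrow> nat set" where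
  "vars (Verd v) = {}"
| "vars (Pref a m) = vars m"
| "vars (Sum m n) = vars m \<union> vars n"
| "vars (Var x) = {x}"

definition closed :: "'a mon \<Rightarrow> bool" where
  "closed m \<longleftrightarrow> vars m = {}"

definition La :: "'a mon \<Rightarrow> 'a list set" where
  "La m = {s. wtrace m s (Verd Yes)}"

definition Lr :: "'a mon \<Rightarrow> 'a list set" where
  "Lr m = {s. wtrace m s (Verd No)}"

definition mon_equiv :: "'a mon \<Rightarrow> 'a mon \<Rightarrow> bool" where
  "mon_equiv m n \<longleftrightarrow> La m = La n \<and> Lr m = Lr n"

fun subst :: "(nat \<Rightarrow> 'a mon) \<Rightarrow> 'a mon \<Rightarrow> 'a mon" where
  "subst \<sigma> (Verd v) = Verd v"
| "subst \<sigma> (Pref a m) = Pref a (subst \<sigma> m)"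
| "subst \<sigma> (Sum m n) = Sum (subst \<sigma> m) (subst \<sigma> n)"
| "subst \<sigma> (Var x) = \<sigma> x"

inductive derivable :: "('a mon \<times> 'a mon) set \<Rightarrow> 'a mon \<Rightarrow> 'a mon \<Rightarrow> bool" for E where
  ax: "(l, r) \<in> E \<Longrightarrow> derivable E l r"
| refl: "derivable E m m"
| sym: "derivable E m n \<Longrightarrow> derivable E n m"
| trans: "derivable E m n \<Longrightarrow> derivable E n k \<Longrightarrow> derivable E m k"
| subst: "derivable E m n \<Longrightarrow> derivable E (subst \<sigma> m) (subst \<sigma> n)"
| cong_pref: "derivable E m n \<Longrightarrow> derivable E (Pref a m) (Pref a n)"
| cong_sum: "derivable E m1 n1 \<Longrightarrow> derivable E m2 n2 \<Longrightarrow> derivable E (Sum m1 m2) (Sum n1 n2)"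

definition Ev :: "('a mon \<times> 'a mon) set" where
  "Ev = {(Sum (Var 0) (Var 1), Sum (Var 1) (Var 0)),
         (Sum (Var 0) (Sum (Var 1) (Var 2)), Sum (Sum (Var 0) (Var 1)) (Var 2)),
         (Sum (Var 0) (Var 0), Var 0),
         (Sum (Var 0) (Verd End), Var 0)}
      \<union> (\<Union>a. {(Pref a (Verd End), Verd End),
               (Verd Yes, Sum (Verd Yes) (Pref a (Verd Yes))),
               (Verd No, Sum (Verd No) (Pref a (Verd No))),
               (Pref a (Sum (Var 0) (Var 1)), Sum (Pref a (Var 0)) (Pref a (Var 1)))})"

end

theory Submission
  imports Defs
begin

fun hasv :: "verdict \<Rightarrow> 'a mon \<Rightarrow> bool" where
  "hasv v (Verd w) = (v = w)"
| "hasv v (Pref a k) = False"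
| "hasv v (Sum k1 k2) = (hasv v k1 \<or> hasv v k2)"
| "hasv v (Var x) = False"

inductive_cases stepSumE: "step (Sum k1 k2) \<alpha> y"
inductive_cases stepPrefE: "step (Pref a k) \<alpha> y"
inductive_cases stepVerdE: "step (Verd w) \<alpha> y"
inductive_cases stepVarE: "step (Var x) \<alpha> y"

lemma S1: "step m \<alpha> y \<Longrightarrow> \<alpha> = Tau \<Longrightarrow> \<exists>w. y = Verd w \<and> hasv w m"
  by (induction rule: step.induct) auto

lemma HV: "hasv w m \<Longrightarrow> step m Tau (Verd w)"
  by (induction m) (auto intro: step.intros)

lemma T1: "tau_star m x \<Longrightarrow> x = m \<or> (\<exists>w. x = Verd w \<and> hasv w m)"
  unfolding tau_star_def
proof (induction rule: rtranclp_induct)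
  case base
  then show ?case by simp
next
  case (step y z)
  then show ?case using S1[of y Tau z] by (auto elim: stepVerdE)
qed

lemma A: "tau_star m (Verd v) \<longleftrightarrow> hasv v m"
proof
  assume "tau_star m (Verd v)"
  then show "hasv v m" using T1 by fastforce
next
  assume "hasv v m"
  then show "tau_star m (Verd v)" unfolding tau_star_def using HV by blast
qed

lemma tau_refl: "tau_star m m" unfolding tau_star_def by simp

lemma tau_trans: "tau_star a b \<Longrightarrow> tau_star b c \<Longrightarrow> tau_star a c"
  unfolding tau_star_def by simp

lemma WV: "weak_act (Verd w) b x \<longleftrightarrow> x = Verd w"
proof
  assume "weak_act (Verd w) b x"
  then obtain m1 m2 where h: "tau_star (Verd w) m1" "step m1 (Act b) m2" "tau_star m2 x"
    unfolding weak_act_def by blast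
  from h(1) T1 have "m1 = Verd w" by fastforce
  with h(2) have "m2 = Verd w" by (auto elim: stepVerdE)
  with h(3) T1 show "x = Verd w" by fastforce
next
  assume "x = Verd w"
  then have "tau_star (Verd w) (Verd w) \<and> step (Verd w) (Act b) (Verd w) \<and> tau_star (Verd w) x"
    by (simp add: tau_refl step.verd)
  then show "weak_act (Verd w) b x" unfolding weak_act_def by blast
qed

lemma WP: "weak_act (Pref a k) b x \<longleftrightarrow> b = a \<and> tau_star k x"
proof
  assume "weak_act (Pref a k) b x"
  then obtain m1 m2 where h: "tau_star (Pref a k) m1" "step m1 (Act b) m2" "tau_star m2 x"
    unfolding weak_act_def by blast
  from h(1) T1 have "m1 = Pref a k" by fastforce
  with h(2) have "b = a" "m2 = k" by (auto elim: stepPrefE)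
  with h(3) show "b = a \<and> tau_star k x" by simp
next
  assume "b = a \<and> tau_star k x"
  then have "tau_star (Pref a k) (Pref a k) \<and> step (Pref a k) (Act b) k \<and> tau_star k x"
    by (simp add: tau_refl step.pref)
  then show "weak_act (Pref a k) b x" unfolding weak_act_def by blast
qed

lemma WX: "\<not> weak_act (Var y) b x"
proof
  assume "weak_act (Var y) b x"
  then obtain m1 m2 where h: "tau_star (Var y) m1" "step m1 (Act b) m2"
    unfolding weak_act_def by blast
  from h(1) T1 have "m1 = Var y" by fastforce
  with h(2) show False by (auto elim: stepVarE)
qed

lemma WS: "weak_act (Sum k1 k2) b x \<longleftrightarrow> weak_act k1 b x \<or> weak_act k2 b x"
proof
  assume "weak_act (Sum k1 k2) b x"
  then obtain m1 m2 where h: "tau_star (Sum k1 k2) m1" "step m1 (Act b) m2" "tau_star m2 x"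
    unfolding weak_act_def by blast
  from h(1) T1 consider "m1 = Sum k1 k2" | w where "m1 = Verd w" "hasv w k1"
    | w where "m1 = Verd w" "hasv w k2" by fastforce
  then show "weak_act k1 b x \<or> weak_act k2 b x"
  proof cases
    case 1
    with h(2) have "step k1 (Act b) m2 \<or> step k2 (Act b) m2" by (auto elim: stepSumE)
    then show ?thesis unfolding weak_act_def using h(3) tau_refl by blast
  next
    case 2
    then show ?thesis unfolding weak_act_def using h A by blast
  next
    case 3
    then show ?thesis unfolding weak_act_def using h A by blast
  qed
next
  have L: "weak_act S b x" if H: "weak_act k b x" "\<And>a m2. step k a m2 \<Longrightarrow> step S a m2"
    "\<And>w. hasv w k \<Longrightarrow> hasv w S" for k S
  proof -
    obtain m1 m2 where h: "tau_star k m1" "step m1 (Act b) m2" "tau_star m2 x"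
      using H unfolding weak_act_def by blast
    from h(1) T1 consider "m1 = k" | w where "m1 = Verd w" "hasv w k" by fastforce
    then show ?thesis
    proof cases
      case 1
      then show ?thesis unfolding weak_act_def using h that(2) tau_refl by blast
    next
      case 2
      then show ?thesis unfolding weak_act_def using h that(3) A by blast
    qed
  qed
  assume "weak_act k1 b x \<or> weak_act k2 b x"
  then show "weak_act (Sum k1 k2) b x"
    by (auto intro: L step.intros)
qed

lemma wpre: "tau_star k m1 \<Longrightarrow> weak_act m1 c m2 \<Longrightarrow> weak_act k c m2"
  unfolding weak_act_def using tau_trans by blast

lemma wtr_pre: "tau_star k m1 \<Longrightarrow> wtrace m1 t x \<Longrightarrow> t \<noteq> [] \<Longrightarrow> wtrace k t x"
  by (cases t rule: remdups_adj.cases) (auto intro: wpre)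

lemma wtr_sum: "wtrace (Sum k1 k2) s (Verd v) \<longleftrightarrow> wtrace k1 s (Verd v) \<or> wtrace k2 s (Verd v)"
  by (cases s rule: remdups_adj.cases) (auto simp: A WS)

lemma wtr_pref: "wtrace (Pref a k) s (Verd v) \<longleftrightarrow> (\<exists>t. s = a # t \<and> wtrace k t (Verd v))"
  apply (cases s rule: remdups_adj.cases)
    apply (auto simp: A WP intro: wtr_pre tau_refl)
  done

lemma wtr_verd: "wtrace (Verd w) s (Verd v) \<longleftrightarrow> v = w"
  by (induction s rule: induct_list012) (auto simp: A WV)

lemma wtr_var: "\<not> wtrace (Var y) s (Verd v)"
  by (cases s rule: remdups_adj.cases) (auto simp: A WX)

fun der :: "'a \<Rightarrow> 'a mon \<Rightarrow> 'a mon" where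
  "der a (Verd w) = Verd w"
| "der a (Pref b k) = (if a = b then k else Verd End)"
| "der a (Sum k1 k2) = Sum (der a k1) (der a k2)"
| "der a (Var x) = Verd End"

lemma wtr_der: "v \<noteq> End \<Longrightarrow> wtrace (der a m) s (Verd v) \<longleftrightarrow> wtrace m (a # s) (Verd v)"
  by (induction m) (auto simp: wtr_sum wtr_pref wtr_verd wtr_var)

abbreviation D :: "'a mon \<Rightarrow> 'a mon \<Rightarrow> bool" where "D \<equiv> derivable Ev"

definition sg :: "'a mon \<Rightarrow> 'a mon \<Rightarrow> 'a mon \<Rightarrow> nat \<Rightarrow> 'a mon" where
  "sg x y z = (\<lambda>i. if i = 0 then x else if i = 1 then y else z)"

lemma axi: "(l, r) \<in> Ev \<Longrightarrow> D (subst (sg x y z) l) (subst (sg x y z) r)"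
  by (rule derivable.subst, rule derivable.ax)

lemma comm: "D (Sum x y) (Sum y x)"
  using axi[of "Sum (Var 0) (Var 1)" "Sum (Var 1) (Var 0)" x y x] by (simp add: Ev_def sg_def)
lemma assoc: "D (Sum x (Sum y z)) (Sum (Sum x y) z)"
  using axi[of "Sum (Var 0) (Sum (Var 1) (Var 2))" "Sum (Sum (Var 0) (Var 1)) (Var 2)" x y z]
  by (simp add: Ev_def sg_def)
lemma idem: "D (Sum x x) x"
  using axi[of "Sum (Var 0) (Var 0)" "Var 0" x x x] by (simp add: Ev_def sg_def)
lemma endr: "D (Sum x (Verd End)) x"
  using axi[of "Sum (Var 0) (Verd End)" "Var 0" x x x] by (simp add: Ev_def sg_def)
lemma dist: "D (Pref a (Sum x y)) (Sum (Pref a x) (Pref a y))"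
  using axi[of "Pref a (Sum (Var 0) (Var 1))" "Sum (Pref a (Var 0)) (Pref a (Var 1))" x y x]
  by (simp add: Ev_def sg_def)
lemma axE: "D (Pref a (Verd End)) (Verd End)"
  by (rule derivable.ax) (auto simp: Ev_def)
lemma axY: "D (Verd Yes) (Sum (Verd Yes) (Pref a (Verd Yes)))"
  by (rule derivable.ax) (auto simp: Ev_def)
lemma axN: "D (Verd No) (Sum (Verd No) (Pref a (Verd No)))"
  by (rule derivable.ax) (auto simp: Ev_def)

lemmas dS = derivable.sym
lemmas dT = derivable.trans
lemmas dR = derivable.refl
lemmas dC = derivable.cong_sum

lemma dtrans[trans]: "D x y \<Longrightarrow> D y z \<Longrightarrow> D x z" by (rule derivable.trans)

definition le :: "'a mon \<Rightarrow> 'a mon \<Rightarrow> bool" where "le n m \<longleftrightarrow> D (Sum m n) m"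

lemma le_refl: "le m m" unfolding le_def by (rule idem)

lemma le_trans: "le k n \<Longrightarrow> le n m \<Longrightarrow> le k m"
  unfolding le_def
proof -
  assume h1: "D (Sum n k) n" and h2: "D (Sum m n) m"
  have "D (Sum m k) (Sum (Sum m n) k)" by (rule dC[OF dS[OF h2] dR])
  also have "D \<dots> (Sum m (Sum n k))" by (rule dS[OF assoc])
  also have "D \<dots> (Sum m n)" by (rule dC[OF dR h1])
  also have "D \<dots> m" by (rule h2)
  finally show "D (Sum m k) m" .
qed

lemma le_sum_l: "le n (Sum n k)"
  unfolding le_def
proof -
  have "D (Sum (Sum n k) n) (Sum n (Sum n k))" by (rule comm)
  also have "D \<dots> (Sum (Sum n n) k)" by (rule assoc)
  also have "D \<dots> (Sum n k)" by (rule dC[OF idem dR])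
  finally show "D (Sum (Sum n k) n) (Sum n k)" .
qed

lemma le_sum_r: "le k (Sum n k)"
  unfolding le_def
proof -
  have "D (Sum (Sum n k) k) (Sum n (Sum k k))" by (rule dS[OF assoc])
  also have "D \<dots> (Sum n k)" by (rule dC[OF dR idem])
  finally show "D (Sum (Sum n k) k) (Sum n k)" .
qed

lemma le_lub: "le n1 m \<Longrightarrow> le n2 m \<Longrightarrow> le (Sum n1 n2) m"
  unfolding le_def
proof -
  assume h1: "D (Sum m n1) m" and h2: "D (Sum m n2) m"
  have "D (Sum m (Sum n1 n2)) (Sum (Sum m n1) n2)" by (rule assoc)
  also have "D \<dots> (Sum m n2)" by (rule dC[OF h1 dR])
  also have "D \<dots> m" by (rule h2)
  finally show "D (Sum m (Sum n1 n2)) m" .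
qed

lemma le_end: "le (Verd End) m" unfolding le_def by (rule endr)

lemma le_pref: "le n m \<Longrightarrow> le (Pref a n) (Pref a m)"
  unfolding le_def
proof -
  assume h: "D (Sum m n) m"
  have "D (Sum (Pref a m) (Pref a n)) (Pref a (Sum m n))" by (rule dS[OF dist])
  also have "D \<dots> (Pref a m)" by (rule derivable.cong_pref[OF h])
  finally show "D (Sum (Pref a m) (Pref a n)) (Pref a m)" .
qed

lemma le_D: "le n m \<Longrightarrow> D n n' \<Longrightarrow> le n' m"
  unfolding le_def using dT dC dR dS by metis

lemma le_antisym: "le n m \<Longrightarrow> le m n \<Longrightarrow> D m n"
  unfolding le_def using dT dS comm by metis

lemma le_hasv: "hasv v m \<Longrightarrow> le (Verd v) m"
  by (induction m) (auto intro: le_refl le_trans le_sum_l le_sum_r)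

lemma le_prefEnd: "le (Pref a (Verd End)) m"
  using le_D[OF le_end dS[OF axE]] .

lemma le_der: "le (Pref a (der a m)) m"
proof (induction m)
  case (Verd w)
  show ?case
  proof (cases w)
    case End then show ?thesis using le_prefEnd by simp
  next
    case Yes then show ?thesis unfolding le_def using dS[OF axY] by simp
  next
    case No then show ?thesis unfolding le_def using dS[OF axN] by simp
  qed
next
  case (Pref b k)
  then show ?case by (simp add: le_refl le_prefEnd)
next
  case (Sum k1 k2)
  have "le (Sum (Pref a (der a k1)) (Pref a (der a k2))) (Sum k1 k2)"
    by (rule le_lub; rule le_trans[OF _ le_sum_l] le_trans[OF _ le_sum_r]; fact)
  then show ?case using le_D[OF _ dS[OF dist]] by simp
next
  case (Var x)
  then show ?case using le_prefEnd by simp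
qed

definition W :: "verdict \<Rightarrow> 'a mon \<Rightarrow> 'a list set" where
  "W v m = {s. wtrace m s (Verd v)}"

lemma main_le: "closed n \<Longrightarrow> W Yes n \<subseteq> W Yes m \<Longrightarrow> W No n \<subseteq> W No m \<Longrightarrow> le n m"
proof (induction n arbitrary: m)
  case (Verd w)
  show ?case
  proof (cases w)
    case End then show ?thesis by (simp add: le_end)
  next
    case Yes
    then have "[] \<in> W Yes (Verd w)" by (simp add: W_def wtr_verd)
    then have "[] \<in> W Yes m" using Verd.prems(2) by blast
    then show ?thesis using Yes le_hasv by (simp add: W_def A[symmetric])
  next
    case No
    then have "[] \<in> W No (Verd w)" by (simp add: W_def wtr_verd)
    then have "[] \<in> W No m" using Verd.prems(3) by blast
    then show ?thesis using No le_hasv by (simp add: W_def A[symmetric])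
  qed
next
  case (Pref a k)
  have c: "closed k" using Pref.prems(1) by (simp add: closed_def)
  have "W v k \<subseteq> W v (der a m)" if "W v (Pref a k) \<subseteq> W v m" "v \<noteq> End" for v
    using that by (auto simp: W_def wtr_der wtr_pref)
  then have "le k (der a m)" using Pref c by auto
  then have "le (Pref a k) (Pref a (der a m))" by (rule le_pref)
  then show ?case using le_der by (rule le_trans)
next
  case (Sum k1 k2)
  have c: "closed k1" "closed k2" using Sum.prems(1) by (auto simp: closed_def)
  have w: "W v (Sum k1 k2) = W v k1 \<union> W v k2" for v
    by (auto simp: W_def wtr_sum)
  have "le k1 m" using Sum.IH(1)[OF c(1)] Sum.prems(2,3) w by blast
  moreover have "le k2 m" using Sum.IH(2)[OF c(2)] Sum.prems(2,3) w by blast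
  ultimately show ?case by (rule le_lub)
next
  case (Var x)
  then show ?case by (simp add: closed_def)
qed

theorem mainTheorem7:
  fixes m n :: "'a mon"
  assumes "closed m" and "closed n" and "mon_equiv m n"
  shows "derivable Ev m n"
proof -
  have e: "W Yes m = W Yes n" "W No m = W No n"
    using assms(3) by (auto simp: mon_equiv_def La_def Lr_def W_def)
  show ?thesis
    by (rule le_antisym; rule main_le) (use assms e in auto)
qed

end
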